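(* Let $p\ge 2$ be an integer and let $G$ be a finite simple $[p+2,p]$-graph of order $n$ with minimum degree $\delta(G)\ge p$ and $n\ge 2p+3$. Then $G$ is triangle-free if and only if $p$ is even, $p\ge 6$, and $G$ is isomorphic to $C_5^{(p/2)}$.
   Context: For integers $s,t$, a graph $G$ is called an $[s,t]$-graph if every induced subgraph of $G$ on $s$ vertices has at least $t$ edges. For a graph $H$ and a positive integer $k$, the $k$-blow-up $H^{(k)}$ is the graph obtained by replacing each vertex of $H$ by $k$ distinct vertices, where a copy of $u$ is adjacent to a copy of $v$ if and only if $uv$ is an edge of $H$ (in particular copies of the same vertex are pairwise nonadjacent). $C_5$ denotes the cycle on $5$ vertices. *)

theory Defs
  imports Main
begin

definition simple_graph :: "'a set \<Rightarrow> ('a \<Rightarrow> 'a \<Rightarrow> bool) \<Rightarrow> bool" where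
  "simple_graph V E \<longleftrightarrow> finite V \<and> (\<forall>u v. E u v \<longrightarrow> u \<in> V \<and> v \<in> V)
     \<and> (\<forall>u v. E u v \<longrightarrow> E v u) \<and> (\<forall>u. \<not> E u u)"

definition edges_in :: "('a \<Rightarrow> 'a \<Rightarrow> bool) \<Rightarrow> 'a set \<Rightarrow> 'a set set" where
  "edges_in E S = {{u, v} | u v. u \<in> S \<and> v \<in> S \<and> E u v}"

definition st_graph :: "'a set \<Rightarrow> ('a \<Rightarrow> 'a \<Rightarrow> bool) \<Rightarrow> nat \<Rightarrow> nat \<Rightarrow> bool" where
  "st_graph V E s t \<longleftrightarrow> (\<forall>S. S \<subseteq> V \<and> card S = s \<longrightarrow> card (edges_in E S) \<ge> t)"

definition degree :: "'a set \<Rightarrow> ('a \<Rightarrow> 'a \<Rightarrow> bool) \<Rightarrow> 'a \<Rightarrow> nat" where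
  "degree V E v = card {u \<in> V. E v u}"

definition min_degree_ge :: "'a set \<Rightarrow> ('a \<Rightarrow> 'a \<Rightarrow> bool) \<Rightarrow> nat \<Rightarrow> bool" where
  "min_degree_ge V E d \<longleftrightarrow> (\<forall>v \<in> V. degree V E v \<ge> d)"

definition triangle_free :: "'a set \<Rightarrow> ('a \<Rightarrow> 'a \<Rightarrow> bool) \<Rightarrow> bool" where
  "triangle_free V E \<longleftrightarrow> \<not> (\<exists>u \<in> V. \<exists>v \<in> V. \<exists>w \<in> V. E u v \<and> E v w \<and> E u w)"

definition graph_iso :: "'a set \<Rightarrow> ('a \<Rightarrow> 'a \<Rightarrow> bool) \<Rightarrow> 'b set \<Rightarrow> ('b \<Rightarrow> 'b \<Rightarrow> bool) \<Rightarrow> bool" where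
  "graph_iso V E V' E' \<longleftrightarrow>
     (\<exists>f. bij_betw f V V' \<and> (\<forall>u \<in> V. \<forall>v \<in> V. E u v \<longleftrightarrow> E' (f u) (f v)))"

definition blowup_V :: "'a set \<Rightarrow> nat \<Rightarrow> ('a \<times> nat) set" where
  "blowup_V V k = V \<times> {0..<k}"

definition blowup_E :: "('a \<Rightarrow> 'a \<Rightarrow> bool) \<Rightarrow> nat \<Rightarrow> 'a \<times> nat \<Rightarrow> 'a \<times> nat \<Rightarrow> bool" where
  "blowup_E E k x y \<longleftrightarrow> snd x < k \<and> snd y < k \<and> E (fst x) (fst y)"

definition C5_V :: "nat set" where "C5_V = {0..<5}"

definition C5_E :: "nat \<Rightarrow> nat \<Rightarrow> bool" where
  "C5_E i j \<longleftrightarrow> i < 5 \<and> j < 5 \<and> (j = (i + 1) mod 5 \<or> i = (j + 1) mod 5)"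

end

theory Submission
  imports Defs
begin

definition nbr :: "'a set \<Rightarrow> ('a \<Rightarrow> 'a \<Rightarrow> bool) \<Rightarrow> 'a \<Rightarrow> 'a set" where
  "nbr V E x = {y\<in>V. E x y}"

definition indep :: "'a set \<Rightarrow> ('a \<Rightarrow> 'a \<Rightarrow> bool) \<Rightarrow> 'a set \<Rightarrow> bool" where
  "indep V E S \<longleftrightarrow> S \<subseteq> V \<and> (\<forall>x\<in>S. \<forall>y\<in>S. \<not> E x y)"

definition twins :: "'a set \<Rightarrow> ('a \<Rightarrow> 'a \<Rightarrow> bool) \<Rightarrow> 'a \<Rightarrow> 'a set" where
  "twins V E w = {y\<in>V. nbr V E y = nbr V E w}"

lemma sum_card_swap:
  assumes "finite X" "finite Y"
  shows "(\<Sum>y\<in>Y. card {x\<in>X. P y x}) = (\<Sum>x\<in>X. card {y\<in>Y. P y x})"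
proof -
  have "\<And>y. card {x\<in>X. P y x} = (\<Sum>x\<in>X. if P y x then 1 else 0)"
    using assms sum.inter_filter[of X "\<lambda>_. 1::nat"] by simp
  moreover have "\<And>x. card {y\<in>Y. P y x} = (\<Sum>y\<in>Y. if P y x then 1 else 0)"
    using assms sum.inter_filter[of Y "\<lambda>_. 1::nat"] by simp
  ultimately show ?thesis using sum.swap[of "\<lambda>y x. if P y x then 1 else (0::nat)" X Y] by simp
qed

lemma less5: "(a::nat) < 5 \<Longrightarrow> a = 0 \<or> a = 1 \<or> a = 2 \<or> a = 3 \<or> a = 4" by auto

lemma C5_notri: assumes "C5_E a b" "C5_E b c" "C5_E a c" shows False
proof -
  have "a < 5" "b < 5" "c < 5" using assms unfolding C5_E_def by auto
  then have "a = 0 \<or> a = 1 \<or> a = 2 \<or> a = 3 \<or> a = 4" "b = 0 \<or> b = 1 \<or> b = 2 \<or> b = 3 \<or> b = 4"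
     "c = 0 \<or> c = 1 \<or> c = 2 \<or> c = 3 \<or> c = 4" using less5 by blast+
  then show False using assms by (elim disjE) (simp_all add: C5_E_def)
qed

locale G =
  fixes V :: "'a set" and E :: "'a \<Rightarrow> 'a \<Rightarrow> bool" and p :: nat
  assumes p2: "p \<ge> 2"
    and sg: "simple_graph V E"
    and st: "st_graph V E (p + 2) p"
    and md: "min_degree_ge V E p"
    and nV: "card V \<ge> 2 * p + 3"
    and tf: "triangle_free V E"
begin

abbreviation N where "N \<equiv> nbr V E"
abbreviation T where "T \<equiv> twins V E"

lemma fin: "finite V" using sg by (simp add: simple_graph_def)
lemma Ein: "E x y \<Longrightarrow> x \<in> V \<and> y \<in> V" using sg by (simp add: simple_graph_def)
lemma Esym: "E x y \<Longrightarrow> E y x" using sg by (simp add: simple_graph_def)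
lemma Eirr: "\<not> E x x" using sg by (simp add: simple_graph_def)
lemma notri: "E x y \<Longrightarrow> E y z \<Longrightarrow> E x z \<Longrightarrow> False"
  using tf Ein unfolding triangle_free_def by blast

lemma N_sub: "N x \<subseteq> V" by (auto simp: nbr_def)
lemma finN: "finite (N x)" using fin N_sub finite_subset by blast
lemma inN: "y \<in> N x \<longleftrightarrow> E x y" using Ein by (auto simp: nbr_def)
lemma N_indep: "indep V E (N x)"
  unfolding indep_def using N_sub inN notri by blast

lemma indep_sub: "indep V E S \<Longrightarrow> S' \<subseteq> S \<Longrightarrow> indep V E S'"
  unfolding indep_def by blast

lemma indep_fin: "indep V E S \<Longrightarrow> finite S"
  unfolding indep_def using fin finite_subset by blast

lemma bound2:
  assumes "indep V E I" "a \<notin> I" "b \<notin> I" "a \<noteq> b"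
  shows "card (edges_in E (insert a (insert b I))) \<le> card (N a \<inter> I) + card (N b \<inter> I) + (if E a b then 1 else 0)"
proof -
  let ?A = "(\<lambda>y. {a, y}) ` (N a \<inter> I)"
  let ?B = "(\<lambda>y. {b, y}) ` (N b \<inter> I)"
  let ?C = "(if E a b then {{a, b}} else {})"
  have fI: "finite I" using assms indep_fin by blast
  have sub: "edges_in E (insert a (insert b I)) \<subseteq> ?A \<union> ?B \<union> ?C"
  proof
    fix e assume "e \<in> edges_in E (insert a (insert b I))"
    then obtain x y where e: "e = {x, y}" and x: "x \<in> insert a (insert b I)"
      and y: "y \<in> insert a (insert b I)" and xy: "E x y"
      unfolding edges_in_def by blast
    have yx: "E y x" using xy Esym by blast
    have nI: "\<not> (x \<in> I \<and> y \<in> I)" using assms(1) xy unfolding indep_def by blast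
    show "e \<in> ?A \<union> ?B \<union> ?C"
    proof -
      { assume "x = a" "y = b" then have ?thesis using e xy by auto }
      moreover { assume "x = b" "y = a" then have ?thesis using e yx by (auto simp: insert_commute) }
      moreover { assume "x = a" "y \<in> I" then have "e \<in> ?A" using e xy inN by blast then have ?thesis by blast }
      moreover { assume "x = b" "y \<in> I" then have "e \<in> ?B" using e xy inN by blast then have ?thesis by blast }
      moreover { assume "y = a" "x \<in> I" then have "e \<in> ?A" using e yx inN by (auto simp: insert_commute) then have ?thesis by blast }
      moreover { assume "y = b" "x \<in> I" then have "e \<in> ?B" using e yx inN by (auto simp: insert_commute) then have ?thesis by blast }
      moreover { assume "x = y" then have False using xy Eirr by blast }
      ultimately show ?thesis using x y nI by blast
    qed
  qed
  have "card (edges_in E (insert a (insert b I))) \<le> card (?A \<union> ?B \<union> ?C)"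
    using sub fI finN by (intro card_mono) auto
  also have "\<dots> \<le> card ?A + card ?B + card ?C"
    by (meson add_mono card_Un_le le_refl order_trans)
  also have "\<dots> \<le> card (N a \<inter> I) + card (N b \<inter> I) + (if E a b then 1 else 0)"
    by (intro add_mono card_image_le) (auto simp: fI)
  finally show ?thesis .
qed

lemma Lpair:
  assumes "indep V E I" "card I = p" "a \<in> V" "b \<in> V" "a \<notin> I" "b \<notin> I" "a \<noteq> b"
  shows "p \<le> card (N a \<inter> I) + card (N b \<inter> I) + (if E a b then 1 else 0)"
proof -
  have fI: "finite I" using assms indep_fin by blast
  have "insert a (insert b I) \<subseteq> V" "card (insert a (insert b I)) = p + 2"
    using assms fI unfolding indep_def by auto
  then have "p \<le> card (edges_in E (insert a (insert b I)))"
    using st unfolding st_graph_def by blast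
  then show ?thesis using bound2 assms by (meson order_trans)
qed

lemma bound1:
  assumes "indep V E I" "a \<notin> I"
  shows "card (edges_in E (insert a I)) \<le> card (N a \<inter> I)"
proof -
  have fI: "finite I" using assms indep_fin by blast
  have "edges_in E (insert a I) \<subseteq> (\<lambda>y. {a, y}) ` (N a \<inter> I)"
  proof
    fix e assume "e \<in> edges_in E (insert a I)"
    then obtain x y where e: "e = {x, y}" and x: "x \<in> insert a I"
      and y: "y \<in> insert a I" and xy: "E x y"
      unfolding edges_in_def by blast
    have yx: "E y x" using xy Esym by blast
    have nI: "\<not> (x \<in> I \<and> y \<in> I)" using assms(1) xy unfolding indep_def by blast
    have "x \<noteq> y" using xy Eirr by blast
    then show "e \<in> (\<lambda>y. {a, y}) ` (N a \<inter> I)"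
      using x y nI e xy yx inN by (auto simp: insert_commute)
  qed
  then have "card (edges_in E (insert a I)) \<le> card ((\<lambda>y. {a, y}) ` (N a \<inter> I))"
    using fI by (intro card_mono) auto
  also have "\<dots> \<le> card (N a \<inter> I)" by (rule card_image_le) (simp add: fI)
  finally show ?thesis .
qed

lemma Lone:
  assumes "indep V E I" "card I = p + 1" "a \<in> V" "a \<notin> I"
  shows "p \<le> card (N a \<inter> I)"
proof -
  have fI: "finite I" using assms indep_fin by blast
  have "insert a I \<subseteq> V" "card (insert a I) = p + 2"
    using assms fI unfolding indep_def by auto
  then have "p \<le> card (edges_in E (insert a I))"
    using st unfolding st_graph_def by blast
  then show ?thesis using bound1 assms by (meson order_trans)
qed

lemma indep_p2: assumes "indep V E S" "card S = p + 2" shows False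
proof -
  have "edges_in E S = {}" using assms(1) unfolding indep_def edges_in_def by blast
  moreover have "S \<subseteq> V" using assms(1) unfolding indep_def by blast
  moreover have "card (edges_in E S) \<ge> p" using st assms(2) \<open>S \<subseteq> V\<close> unfolding st_graph_def by blast
  ultimately show False using p2 by simp
qed

lemma indep_le1: assumes "indep V E S" shows "card S \<le> p + 1"
proof (rule ccontr)
  assume "\<not> card S \<le> p + 1"
  then obtain S' where "S' \<subseteq> S" "card S' = p + 2"
    using obtain_subset_with_card_n[of "p+2" S] by auto
  then show False using indep_p2[OF indep_sub[OF assms]] by blast
qed

lemma indep_le: assumes "indep V E S" shows "card S \<le> p"
proof (rule ccontr)
  assume "\<not> card S \<le> p"
  then obtain I where IS: "I \<subseteq> S" and cI: "card I = p + 1"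
    using obtain_subset_with_card_n[of "p+1" S] by auto
  have iI: "indep V E I" using IS assms indep_sub by blast
  have fI: "finite I" using iI indep_fin by blast
  have IV: "I \<subseteq> V" using iI unfolding indep_def by blast
  have big: "\<And>w. w \<in> V - I \<Longrightarrow> p \<le> card (N w \<inter> I)" using Lone iI cI by blast
  have "indep V E (V - I)"
    unfolding indep_def
  proof (intro conjI ballI)
    fix x y assume x: "x \<in> V - I" and y: "y \<in> V - I"
    show "\<not> E x y"
    proof
      assume xy: "E x y"
      have "(N x \<inter> I) \<inter> (N y \<inter> I) = {}" using xy notri inN by blast
      then have "card ((N x \<inter> I) \<union> (N y \<inter> I)) = card (N x \<inter> I) + card (N y \<inter> I)"
        using fI by (intro card_Un_disjoint) auto
      moreover have "card ((N x \<inter> I) \<union> (N y \<inter> I)) \<le> card I" using fI by (intro card_mono) auto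
      moreover have "p \<le> card (N x \<inter> I)" "p \<le> card (N y \<inter> I)" using big x y by auto
      ultimately show False using cI p2 by linarith
    qed
  qed auto
  moreover have "card (V - I) \<ge> p + 2"
  proof -
    have "card (V - I) = card V - card I" using IV fin finite_subset by (metis card_Diff_subset)
    then show ?thesis using nV cI by linarith
  qed
  ultimately show False using indep_le1 by fastforce
qed

lemma deg: assumes "x \<in> V" shows "card (N x) = p"
proof -
  have "card (N x) \<ge> p" using md assms unfolding min_degree_ge_def degree_def nbr_def by blast
  moreover have "card (N x) \<le> p" using indep_le N_indep by blast
  ultimately show ?thesis by simp
qed

end

context G
begin

lemma card_R:
  assumes uv: "E u v"
  shows "card (V - N u - N v) \<ge> 3" and "N u \<inter> N v = {}"
proof -
  show AB: "N u \<inter> N v = {}" using uv notri inN by blast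
  have "card (N u) = p" "card (N v) = p" using deg Ein uv by auto
  then have "card (N u \<union> N v) = 2 * p" using AB finN by (simp add: card_Un_disjoint)
  moreover have "V - N u - N v = V - (N u \<union> N v)" by blast
  moreover have "card (V - (N u \<union> N v)) = card V - card (N u \<union> N v)"
    using N_sub fin by (intro card_Diff_subset) (auto intro: finite_subset)
  ultimately show "card (V - N u - N v) \<ge> 3" using nV by simp
qed

lemma three:
  assumes "finite R" "card R \<ge> 3" "x \<in> R"
  shows "\<exists>y z. y \<in> R \<and> z \<in> R \<and> y \<noteq> x \<and> z \<noteq> x \<and> y \<noteq> z"
proof -
  have "card (R - {x}) \<ge> 2" using assms by simp
  then obtain S where "S \<subseteq> R - {x}" "card S = 2"
    using obtain_subset_with_card_n[of 2 "R - {x}"] by auto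
  then show ?thesis by (auto simp: card_2_iff)
qed

lemma edgeR:
  assumes uv: "E u v" and r: "r \<in> V" "\<not> E u r" "\<not> E v r"
  shows "2 * card (N r \<inter> N u) = p"
proof -
  define A where "A = N u"
  define B where "B = N v"
  define R where "R = V - A - B"
  have AB: "A \<inter> B = {}" using card_R(2)[OF uv] unfolding A_def B_def .
  have iA: "indep V E A" "indep V E B" unfolding A_def B_def by (rule N_indep)+
  have cA: "card A = p" "card B = p" using deg Ein uv unfolding A_def B_def by auto
  have fA: "finite A" "finite B" unfolding A_def B_def by (rule finN)+
  have cR: "card R \<ge> 3" using card_R(1)[OF uv] unfolding R_def A_def B_def .
  have fR: "finite R" unfolding R_def using fin by simp
  have RV: "R \<subseteq> V" unfolding R_def by blast
  have Rn: "\<And>x. x \<in> R \<Longrightarrow> x \<notin> A \<and> x \<notin> B \<and> x \<in> V" unfolding R_def by blast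
  have decomp: "card (N x \<inter> A) + card (N x \<inter> B) + card (N x \<inter> R) = p" if "x \<in> R" for x
  proof -
    have "N x = (N x \<inter> A) \<union> (N x \<inter> B) \<union> (N x \<inter> R)" using N_sub unfolding R_def by blast
    moreover have "card ((N x \<inter> A) \<union> (N x \<inter> B) \<union> (N x \<inter> R))
        = card (N x \<inter> A) + card (N x \<inter> B) + card (N x \<inter> R)"
    proof -
      have "card ((N x \<inter> A) \<union> (N x \<inter> B)) = card (N x \<inter> A) + card (N x \<inter> B)"
        using AB fA by (intro card_Un_disjoint) auto
      moreover have "card ((N x \<inter> A) \<union> (N x \<inter> B) \<union> (N x \<inter> R)) = card ((N x \<inter> A) \<union> (N x \<inter> B)) + card (N x \<inter> R)"
        using fA fR unfolding R_def by (intro card_Un_disjoint) auto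
      ultimately show ?thesis by simp
    qed
    ultimately show ?thesis using deg Rn that by metis
  qed
  have pairA: "p \<le> card (N x \<inter> A) + card (N y \<inter> A) + (if E x y then 1 else 0)"
    if "x \<in> R" "y \<in> R" "x \<noteq> y" for x y
    using Lpair[OF iA(1) cA(1)] Rn that by blast
  have pairB: "p \<le> card (N x \<inter> B) + card (N y \<inter> B) + (if E x y then 1 else 0)"
    if "x \<in> R" "y \<in> R" "x \<noteq> y" for x y
    using Lpair[OF iA(2) cA(2)] Rn that by blast
  have claim: False if "a \<in> R" "b \<in> R" "c \<in> R" "E a b" "c \<noteq> a" "\<not> E a c" for a b c
  proof -
    have "b \<in> N a \<inter> R" using that inN by blast
    then have "card (N a \<inter> R) \<ge> 1" using fR
      by (metis Int_commute One_nat_def Suc_leI card_gt_0_iff empty_iff finite_Int)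
    moreover have "card (N c \<inter> R) \<ge> 0" by simp
    moreover note decomp[OF that(1)] decomp[OF that(3)]
    moreover have "p \<le> card (N a \<inter> A) + card (N c \<inter> A)" using pairA[of a c] that by simp
    moreover have "p \<le> card (N a \<inter> B) + card (N c \<inter> B)" using pairB[of a c] that by simp
    ultimately show False by linarith
  qed
  have Rind: "\<not> E x y" if xyR: "x \<in> R" "y \<in> R" for x y
  proof
    assume xy: "E x y"
    then have "x \<noteq> y" using Eirr by blast
    obtain y1 z1 where "y1 \<in> R" "z1 \<in> R" "y1 \<noteq> x" "z1 \<noteq> x" "y1 \<noteq> z1"
      using three[OF fR cR xyR(1)] by blast
    then obtain c where c: "c \<in> R" "c \<noteq> x" "c \<noteq> y" by metis
    show False
    proof (cases "E x c")
      case True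
      then have "\<not> E y c" using notri xy by blast
      then show False using claim[of y x c] c xyR xy Esym by blast
    next
      case False
      then show False using claim[of x y c] c xyR xy by blast
    qed
  qed
  have sumR: "card (N x \<inter> A) + card (N x \<inter> B) = p" if "x \<in> R" for x
  proof -
    have "N x \<inter> R = {}" using Rind that inN by blast
    then show ?thesis using decomp[OF that] by simp
  qed
  have eqA: "card (N x \<inter> A) + card (N y \<inter> A) = p" if "x \<in> R" "y \<in> R" "x \<noteq> y" for x y
  proof -
    have "\<not> E x y" using Rind that by blast
    then show ?thesis using pairA[OF that] pairB[OF that] sumR[OF that(1)] sumR[OF that(2)] by simp
  qed
  have rR: "r \<in> R" using r inN unfolding R_def A_def B_def by blast
  obtain y z where "y \<in> R" "z \<in> R" "y \<noteq> r" "z \<noteq> r" "y \<noteq> z"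
    using three[OF fR cR rR] by blast
  then show ?thesis using eqA[of r y] eqA[of r z] eqA[of y z] rR unfolding A_def by simp
qed

lemma edge_ex: "\<exists>u v. E u v"
proof -
  have "V \<noteq> {}" using nV by auto
  then obtain x where x: "x \<in> V" by blast
  then have "card (N x) = p" by (rule deg)
  then have "N x \<noteq> {}" using p2 by auto
  then show ?thesis using inN by blast
qed

lemma p_even: "p = 2 * (p div 2)"
proof -
  obtain u v where uv: "E u v" using edge_ex by blast
  have "card (V - N u - N v) \<ge> 3" using card_R(1)[OF uv] .
  then have "V - N u - N v \<noteq> {}" by (metis card.empty not_numeral_le_zero)
  then obtain r where "r \<in> V - N u - N v" by blast
  then have "2 * card (N r \<inter> N u) = p" using edgeR[OF uv] inN by blast
  then show ?thesis by presburger
qed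

lemma common:
  assumes "x \<in> V" "y \<in> V" "\<not> E x y" "N x \<noteq> N y"
  shows "card (N x \<inter> N y) = p div 2"
proof -
  have "\<not> N x \<subseteq> N y"
  proof
    assume "N x \<subseteq> N y"
    then show False using card_subset_eq[OF finN] deg assms by metis
  qed
  then obtain z where z: "z \<in> N x" "z \<notin> N y" by blast
  then have "E x z" "\<not> E z y" using inN Esym by blast+
  then have "2 * card (N y \<inter> N x) = p" using edgeR[of x z y] assms by blast
  then show ?thesis by (simp add: Int_commute)
qed

end

context G
begin

lemma T_sub: "T w \<subseteq> V" by (auto simp: twins_def)
lemma finT: "finite (T w)" using T_sub fin finite_subset by blast
lemma inT: "z \<in> T w \<longleftrightarrow> z \<in> V \<and> N z = N w" by (auto simp: twins_def)
lemma self_T: "w \<in> V \<Longrightarrow> w \<in> T w" by (auto simp: twins_def)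

lemma TN: "T w \<inter> N w = {}"
proof -
  { fix y assume "y \<in> T w" "y \<in> N w"
    then have "N y = N w" "E w y" using inT inN by auto
    then have "w \<in> N w" using inN Esym by blast
    then have False using inN Eirr by blast }
  then show ?thesis by blast
qed

lemma count:
  assumes w: "w \<in> V"
  shows "card V + card (T w) = 3 * p"
proof -
  define k where "k = p div 2"
  have pk: "p = 2 * k" using p_even k_def by simp
  have k0: "k > 0" using p2 pk by simp
  define X where "X = V - T w - N w"
  have e1: "\<And>y. N y \<inter> N w = {x\<in>N w. E y x}" unfolding nbr_def by blast
  have e2: "\<And>x. {y\<in>V. E y x} = N x" unfolding nbr_def using Esym by blast
  have S1: "(\<Sum>y\<in>V. card (N y \<inter> N w)) = p * p"
  proof -
    have "(\<Sum>y\<in>V. card (N y \<inter> N w)) = (\<Sum>y\<in>V. card {x\<in>N w. E y x})"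
      by (simp only: e1)
    also have "\<dots> = (\<Sum>x\<in>N w. card {y\<in>V. E y x})" by (rule sum_card_swap[OF finN fin])
    also have "\<dots> = (\<Sum>x\<in>N w. p)"
      by (rule sum.cong) (auto simp: e2 deg N_sub[THEN subsetD])
    also have "\<dots> = p * p" using deg[OF w] by simp
    finally show ?thesis .
  qed
  have fX: "finite X" unfolding X_def using fin by simp
  have VU: "V = (T w \<union> N w) \<union> X" unfolding X_def using T_sub N_sub by blast
  have d1: "(T w \<union> N w) \<inter> X = {}" unfolding X_def by blast
  have d2: "T w \<inter> N w = {}" by (rule TN)
  have sV: "(\<Sum>y\<in>V. card (N y \<inter> N w)) = (\<Sum>y\<in>T w. card (N y \<inter> N w)) + (\<Sum>y\<in>N w. card (N y \<inter> N w)) + (\<Sum>y\<in>X. card (N y \<inter> N w))"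
    by (subst VU, subst sum.union_disjoint, simp_all add: finT finN fX d1, subst sum.union_disjoint, simp_all add: finT finN d2)
  have cV: "card V = card (T w) + card (N w) + card X"
    by (subst VU, subst card_Un_disjoint, simp_all add: finT finN fX d1, subst card_Un_disjoint, simp_all add: finT finN d2)
  have sT: "(\<Sum>y\<in>T w. card (N y \<inter> N w)) = card (T w) * p"
  proof -
    have "(\<Sum>y\<in>T w. card (N y \<inter> N w)) = (\<Sum>y\<in>T w. p)"
      by (rule sum.cong) (auto simp: inT deg[OF w])
    then show ?thesis by simp
  qed
  have sN: "(\<Sum>y\<in>N w. card (N y \<inter> N w)) = 0"
  proof -
    have "\<And>y. y \<in> N w \<Longrightarrow> N y \<inter> N w = {}" using inN notri Esym by blast
    then show ?thesis by simp
  qed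
  have sX: "(\<Sum>y\<in>X. card (N y \<inter> N w)) = card X * k"
  proof -
    have "(\<Sum>y\<in>X. card (N y \<inter> N w)) = (\<Sum>y\<in>X. k)"
    proof (rule sum.cong)
      fix y assume y: "y \<in> X"
      then have "y \<in> V" "\<not> E w y" "N w \<noteq> N y" unfolding X_def using inN inT by auto
      then have "card (N w \<inter> N y) = k" using common w k_def by blast
      then show "card (N y \<inter> N w) = k" by (simp add: Int_commute)
    qed simp
    then show ?thesis by simp
  qed
  have "p * p = card (T w) * p + card X * k" using S1 sV sT sN sX by simp
  then have "k * (4 * k) = k * (2 * card (T w) + card X)" using pk by (simp add: algebra_simps)
  then have "4 * k = 2 * card (T w) + card X" using k0 by simp
  then show ?thesis using cV deg[OF w] pk by simp
qed

lemma tk: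
  assumes u: "u \<in> V"
  shows "2 * card (T u) = p"
proof -
  define k where "k = p div 2"
  have pk: "p = 2 * k" using p_even k_def by simp
  have k0: "k > 0" using p2 pk by simp
  have cnt: "\<And>z. z \<in> V \<Longrightarrow> card (T z) = card (T u)" using count u by (metis add_left_cancel)
  define X where "X = V - T u - N u"
  have fX: "finite X" unfolding X_def using fin by simp
  have VU: "V = (T u \<union> N u) \<union> X" unfolding X_def using T_sub N_sub by blast
  have d1: "(T u \<union> N u) \<inter> X = {}" unfolding X_def by blast
  have d2: "T u \<inter> N u = {}" by (rule TN)
  have cV: "card V = card (T u) + card (N u) + card X"
    by (subst VU, subst card_Un_disjoint, simp_all add: finT finN fX d1, subst card_Un_disjoint, simp_all add: finT finN d2)
  have "card X > 0" using cV count[OF u] deg[OF u] nV by linarith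
  then obtain x where xX: "x \<in> X" by (metis card_gt_0_iff ex_in_conv)
  have x: "x \<in> V" "\<not> E u x" "N u \<noteq> N x" using xX unfolding X_def using inN inT by auto
  have cx: "card (N u \<inter> N x) = k" using common[OF u x(1) x(2) x(3)] k_def by simp
  have le: "card (T u) \<le> k"
  proof -
    have "N u \<inter> N x \<noteq> {}" using cx k0 by auto
    then obtain y where y: "y \<in> N u \<inter> N x" by blast
    have "T y \<subseteq> N u \<inter> N x"
    proof
      fix z assume "z \<in> T y"
      then have "z \<in> V" "N z = N y" using inT by auto
      moreover have "u \<in> N y" "x \<in> N y" using y inN Esym by blast+
      ultimately show "z \<in> N u \<inter> N x" using inN Esym by blast
    qed
    then have "card (T y) \<le> k" using cx card_mono finN by (metis finite_Int)
    moreover have "y \<in> V" using y N_sub by blast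
    ultimately show ?thesis using cnt by simp
  qed
  have ge: "k \<le> card (T u)"
  proof -
    define Y where "Y = N x - N u"
    have cY: "card Y = k"
    proof -
      have "card Y = card (N x) - card (N x \<inter> N u)" unfolding Y_def
        by (metis card_Diff_subset_Int finN finite_Int)
      then show ?thesis using deg[OF x(1)] cx pk by (simp add: Int_commute)
    qed
    have cUX: "card (N u - N x) = k"
    proof -
      have "card (N u - N x) = card (N u) - card (N u \<inter> N x)"
        by (metis card_Diff_subset_Int finN finite_Int)
      then show ?thesis using deg[OF u] cx pk by simp
    qed
    have claim: "N y \<inter> N u = N u - N x" if yY: "y \<in> Y" for y
    proof -
      have y: "y \<in> V" "E x y" "\<not> E u y" using yY N_sub unfolding Y_def using inN by auto
      have "N u \<noteq> N y"
      proof
        assume "N u = N y"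
        then have "x \<in> N u" using y inN Esym by metis
        then show False using x inN by blast
      qed
      then have c1: "card (N u \<inter> N y) = k" using common[OF u y(1) y(3)] k_def by simp
      have sub: "N y \<inter> N u \<subseteq> N u - N x" using y notri inN by blast
      show ?thesis using card_subset_eq[OF _ sub] c1 cUX by (simp add: Int_commute finN)
    qed
    have "Y \<noteq> {}" using cY k0 by auto
    then obtain y0 where y0: "y0 \<in> Y" by blast
    have "Y \<subseteq> T y0"
    proof
      fix y assume yY: "y \<in> Y"
      have yV: "y \<in> V" "y0 \<in> V" using yY y0 unfolding Y_def using N_sub by blast+
      show "y \<in> T y0"
      proof (cases "y = y0")
        case True then show ?thesis using yV self_T by simp
      next
        case False
        have nE: "\<not> E y0 y" using yY y0 unfolding Y_def using inN notri by blast
        have "N y0 = N y"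
        proof (rule ccontr)
          assume "N y0 \<noteq> N y"
          then have ck: "card (N y0 \<inter> N y) = k" using common[OF yV(2) yV(1) nE] k_def by simp
          have "E x y0" "E x y" using yY y0 unfolding Y_def using inN by auto
          then have "x \<in> N y0" "x \<in> N y" using inN Esym by blast+
          moreover have "N u - N x \<subseteq> N y0" "N u - N x \<subseteq> N y"
            using claim[OF yY] claim[OF y0] by blast+
          ultimately have "insert x (N u - N x) \<subseteq> N y0 \<inter> N y" by blast
          moreover have "card (insert x (N u - N x)) = k + 1"
          proof -
            have "x \<notin> N u - N x" using x(2) inN by blast
            then show ?thesis using cUX finN by simp
          qed
          ultimately have "k + 1 \<le> k" using ck card_mono finN by (metis finite_Int)
          then show False by simp
        qed
        then show ?thesis using yV inT by simp
      qed
    qed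
    then have "k \<le> card (T y0)" using cY card_mono finT by metis
    moreover have "y0 \<in> V" using y0 N_sub unfolding Y_def by blast
    ultimately show ?thesis using cnt by metis
  qed
  show ?thesis using le ge pk by simp
qed

end

lemma C5_tab:
  assumes "i < 5" "j < 5"
  shows "C5_E i j \<longleftrightarrow> (i = 0 \<and> (j = 1 \<or> j = 4)) \<or> (i = 1 \<and> (j = 0 \<or> j = 2)) \<or>
     (i = 2 \<and> (j = 1 \<or> j = 3)) \<or> (i = 3 \<and> (j = 2 \<or> j = 4)) \<or> (i = 4 \<and> (j = 3 \<or> j = 0))"
proof -
  have "i = 0 \<or> i = 1 \<or> i = 2 \<or> i = 3 \<or> i = 4" "j = 0 \<or> j = 1 \<or> j = 2 \<or> j = 3 \<or> j = 4"
    using less5 assms by blast+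
  then show ?thesis by (elim disjE) (simp_all add: C5_E_def)
qed

lemma cls_bij:
  assumes fV: "finite V" and lt: "\<forall>z\<in>V. cls z < (5::nat)"
    and cc: "\<forall>i<5. card {z\<in>V. cls z = i} = k"
  shows "\<exists>g. bij_betw g V ({0..<5} \<times> {0..<k::nat}) \<and> (\<forall>z\<in>V. fst (g z) = cls z)"
proof -
  have "\<forall>i. \<exists>h. i < 5 \<longrightarrow> bij_betw h {z\<in>V. cls z = i} {0..<k}"
  proof
    fix i
    show "\<exists>h. i < 5 \<longrightarrow> bij_betw h {z\<in>V. cls z = i} {0..<k}"
    proof (cases "i < 5")
      case True
      then have "card {z\<in>V. cls z = i} = card {0..<k}" using cc by simp
      then obtain h where "bij_betw h {z\<in>V. cls z = i} {0..<k}"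
        using finite_same_card_bij[of "{z\<in>V. cls z = i}" "{0..<k}"] fV by auto
      then show ?thesis by blast
    qed simp
  qed
  then obtain H where H: "\<And>i. i < 5 \<Longrightarrow> bij_betw (H i) {z\<in>V. cls z = i} {0..<k}" by metis
  define g where "g z = (cls z, H (cls z) z)" for z
  have inj: "inj_on g V"
  proof (rule inj_onI)
    fix z z' assume z: "z \<in> V" "z' \<in> V" "g z = g z'"
    then have c: "cls z = cls z'" and h: "H (cls z) z = H (cls z) z'" unfolding g_def by auto
    have "inj_on (H (cls z)) {y\<in>V. cls y = cls z}" using H[of "cls z"] lt z bij_betw_imp_inj_on by blast
    then show "z = z'" using h c z by (auto dest: inj_onD)
  qed
  have img: "g ` V = {0..<5} \<times> {0..<k}"
  proof
    show "g ` V \<subseteq> {0..<5} \<times> {0..<k}"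
    proof
      fix y assume "y \<in> g ` V"
      then obtain z where z: "z \<in> V" "y = g z" by blast
      have "H (cls z) z \<in> {0..<k}" using bij_betw_apply[OF H[of "cls z"]] lt z by auto
      then show "y \<in> {0..<5} \<times> {0..<k}" using z lt unfolding g_def by auto
    qed
  next
    show "{0..<5} \<times> {0..<k} \<subseteq> g ` V"
    proof
      fix y :: "nat \<times> nat" assume y: "y \<in> {0..<5} \<times> {0..<k}"
      then obtain i j where ij: "y = (i, j)" "i < 5" "j < k" by auto
      then have "j \<in> H i ` {z\<in>V. cls z = i}" using bij_betw_imp_surj_on[OF H[of i]] by auto
      then obtain z where "z \<in> V" "cls z = i" "H i z = j" by auto
      then show "y \<in> g ` V" using ij unfolding g_def by force
    qed
  qed
  show ?thesis using inj img unfolding bij_betw_def g_def by auto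
qed

context G
begin

lemma twinN: assumes "w \<in> T a" "z \<in> N a" shows "w \<in> N z"
proof -
  have "N w = N a" using assms(1) inT by blast
  then have "E w z" using assms(2) inN by metis
  then show ?thesis using inN Esym by blast
qed

lemma C5_structure:
  "\<exists>cls. (\<forall>z\<in>V. cls z < (5::nat)) \<and> (\<forall>i<5. card {z\<in>V. cls z = i} = p div 2)
     \<and> (\<forall>z\<in>V. \<forall>z'\<in>V. E z z' \<longleftrightarrow> C5_E (cls z) (cls z'))"
proof -
  define k where "k = p div 2"
  have pk: "p = 2 * k" using p_even k_def by simp
  have k0: "k > 0" using p2 pk by simp
  obtain u v where "E u v" using edge_ex by blast
  then have u: "u \<in> V" using Ein by blast
  have tT: "\<And>w. w \<in> V \<Longrightarrow> card (T w) = k" using tk pk by fastforce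
  have cV5: "card V = 5 * k" using count[OF u] tT[OF u] pk by simp
  define X where "X = V - T u - N u"
  have fX: "finite X" unfolding X_def using fin by simp
  have VU: "V = (T u \<union> N u) \<union> X" unfolding X_def using T_sub N_sub by blast
  have d1: "(T u \<union> N u) \<inter> X = {}" unfolding X_def by blast
  have d2: "T u \<inter> N u = {}" by (rule TN)
  have cV: "card V = card (T u) + card (N u) + card X"
    by (subst VU, subst card_Un_disjoint, simp_all add: finT finN fX d1, subst card_Un_disjoint, simp_all add: finT finN d2)
  have cX: "card X = 2 * k" using cV cV5 tT[OF u] deg[OF u] pk by simp
  then obtain x where xX: "x \<in> X" using k0 by (metis card.empty ex_in_conv mult_is_0 neq0_conv zero_neq_numeral)
  have x: "x \<in> V" "\<not> E u x" "N u \<noteq> N x" using xX unfolding X_def using inN inT by auto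
  have cx: "card (N u \<inter> N x) = k" using common[OF u x(1) x(2) x(3)] k_def by simp
  have cUX: "card (N u - N x) = k"
  proof -
    have "card (N u - N x) = card (N u) - card (N u \<inter> N x)"
      by (metis card_Diff_subset_Int finN finite_Int)
    then show ?thesis using deg[OF u] cx pk by simp
  qed
  have TxX: "T x \<subseteq> X"
  proof
    fix z assume z: "z \<in> T x"
    then have zz: "z \<in> V" "N z = N x" using inT by auto
    have "z \<notin> T u" using zz x(3) inT by auto
    moreover have "z \<notin> N u"
    proof
      assume "z \<in> N u"
      then have "u \<in> N z" using inN Esym by blast
      then have "E x u" using zz inN by blast
      then show False using x(2) Esym by blast
    qed
    ultimately show "z \<in> X" using zz unfolding X_def by blast
  qed
  have cTx: "card (T x) = k" using tT[OF x(1)] .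
  have cX3: "card (X - T x) = k" using cX cTx TxX fX by (simp add: card_Diff_subset finT)
  have NxTu: "N x \<inter> T u = {}"
  proof -
    { fix z assume "z \<in> N x" "z \<in> T u"
      then have "x \<in> N u" using inN inT Esym by metis
      then have False using x inN by blast }
    then show ?thesis by blast
  qed
  have NxTx: "N x \<inter> T x = {}" using TN by blast
  have NxX: "N x \<inter> X = X - T x"
  proof -
    have sub: "N x \<inter> X \<subseteq> X - T x" using NxTx by blast
    have "N x = (N x \<inter> N u) \<union> (N x \<inter> X)" using N_sub NxTu unfolding X_def by blast
    moreover have "(N x \<inter> N u) \<inter> (N x \<inter> X) = {}" unfolding X_def by blast
    ultimately have "card (N x) = card (N x \<inter> N u) + card (N x \<inter> X)"
      by (metis card_Un_disjoint finN finite_Int)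
    then have "card (N x \<inter> X) = k" using deg[OF x(1)] cx pk by (simp add: Int_commute)
    then show ?thesis using card_subset_eq[OF _ sub] cX3 fX by simp
  qed
  have TuTx: "T u \<inter> T x = {}" using x(3) inT by blast
  have TuX: "T u \<inter> X = {}" unfolding X_def by blast
  have NuX: "N u \<inter> X = {}" unfolding X_def by blast
  have fill: "N z = S" if "z \<in> V" "S \<subseteq> N z" "card S = p" for z S
    using card_subset_eq[OF finN that(2)] deg[OF that(1)] that(3) by simp
  have N0: "N z = N u" if "z \<in> T u" for z using that inT by blast
  have N2: "N z = N x" if "z \<in> T x" for z using that inT by blast
  have N1: "N z = T u \<union> T x" if z: "z \<in> N u \<inter> N x" for z
  proof (rule fill)
    show "z \<in> V" using z N_sub by blast
    show "T u \<union> T x \<subseteq> N z" using z twinN by blast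
    show "card (T u \<union> T x) = p" using TuTx tT[OF u] cTx pk by (simp add: card_Un_disjoint finT)
  qed
  have N3: "N z = T x \<union> (N u - N x)" if z: "z \<in> X - T x" for z
  proof (rule fill)
    show zV: "z \<in> V" using z unfolding X_def by blast
    have zx: "E x z" using z NxX inN by blast
    have s1: "T x \<subseteq> N z" using zx twinN inN by blast
    have zz: "\<not> E u z" "N u \<noteq> N z" using z inN inT unfolding X_def by auto
    have c1: "card (N u \<inter> N z) = k" using common[OF u zV zz] k_def by simp
    have sub: "N z \<inter> N u \<subseteq> N u - N x" using zx notri inN by blast
    have "N z \<inter> N u = N u - N x" using card_subset_eq[OF _ sub] c1 cUX by (simp add: Int_commute finN)
    then show "T x \<union> (N u - N x) \<subseteq> N z" using s1 by blast
    have "T x \<inter> (N u - N x) = {}" using TxX NuX by blast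
    then show "card (T x \<union> (N u - N x)) = p" using cTx cUX pk by (simp add: card_Un_disjoint finT finN)
  qed
  have N4: "N z = T u \<union> (X - T x)" if z: "z \<in> N u - N x" for z
  proof (rule fill)
    show "z \<in> V" using z N_sub by blast
    have s1: "T u \<subseteq> N z" using z twinN by blast
    have s2: "X - T x \<subseteq> N z"
    proof
      fix w assume "w \<in> X - T x"
      then have "z \<in> N w" using N3 z by blast
      then show "w \<in> N z" using inN Esym by blast
    qed
    show "T u \<union> (X - T x) \<subseteq> N z" using s1 s2 by blast
    have "T u \<inter> (X - T x) = {}" using TuX by blast
    then show "card (T u \<union> (X - T x)) = p" using tT[OF u] cX3 pk by (simp add: card_Un_disjoint finT fX)
  qed
  define cls where "cls z = (if z \<in> T u then 0 else if z \<in> N u \<inter> N x then 1 else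
      if z \<in> N u then 4 else if z \<in> T x then 2 else (3::nat))" for z
  have m0: "cls z = 0 \<longleftrightarrow> z \<in> T u" for z unfolding cls_def by auto
  have m1: "cls z = 1 \<longleftrightarrow> z \<in> N u \<inter> N x" for z unfolding cls_def using d2 by auto
  have m4: "cls z = 4 \<longleftrightarrow> z \<in> N u - N x" for z unfolding cls_def using d2 by auto
  have m2: "cls z = 2 \<longleftrightarrow> z \<in> T x" for z unfolding cls_def using TxX d2 TuX NuX by auto
  have m3: "z \<in> V \<Longrightarrow> cls z = 3 \<longleftrightarrow> z \<in> X - T x" for z unfolding cls_def X_def by auto
  have lt: "\<forall>z\<in>V. cls z < 5" unfolding cls_def by auto
  have cc: "\<forall>i<5. card {z\<in>V. cls z = i} = k"
  proof (intro allI impI)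
    fix i :: nat assume "i < 5"
    then have "i = 0 \<or> i = 1 \<or> i = 2 \<or> i = 3 \<or> i = 4" using less5 by blast
    moreover have "{z\<in>V. cls z = 0} = T u" using m0 T_sub by blast
    moreover have "{z\<in>V. cls z = 1} = N u \<inter> N x" using m1 N_sub by blast
    moreover have "{z\<in>V. cls z = 2} = T x" using m2 T_sub by blast
    moreover have "{z\<in>V. cls z = 3} = X - T x" using m3 unfolding X_def by blast
    moreover have "{z\<in>V. cls z = 4} = N u - N x" using m4 N_sub by blast
    ultimately show "card {z\<in>V. cls z = i} = k" using tT[OF u] cx cTx cX3 cUX by auto
  qed
  have adj: "E z z' \<longleftrightarrow> C5_E (cls z) (cls z')" if z: "z \<in> V" "z' \<in> V" for z z'
  proof -
    have "E z z' \<longleftrightarrow> z' \<in> N z" using inN by blast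
    also have "\<dots> \<longleftrightarrow> (cls z = 0 \<and> (cls z' = 1 \<or> cls z' = 4)) \<or> (cls z = 1 \<and> (cls z' = 0 \<or> cls z' = 2)) \<or>
     (cls z = 2 \<and> (cls z' = 1 \<or> cls z' = 3)) \<or> (cls z = 3 \<and> (cls z' = 2 \<or> cls z' = 4)) \<or> (cls z = 4 \<and> (cls z' = 3 \<or> cls z' = 0))"
    proof -
      have "cls z = 0 \<or> cls z = 1 \<or> cls z = 2 \<or> cls z = 3 \<or> cls z = 4" using lt z less5 by blast
      moreover have Fu: "z' \<in> N u \<longleftrightarrow> cls z' = 1 \<or> cls z' = 4" using m1 m4 by blast
      moreover have Fx: "z' \<in> N x \<longleftrightarrow> cls z' = 1 \<or> cls z' = 3"
      proof -
        have "z' \<in> N x \<longleftrightarrow> z' \<in> N x \<inter> N u \<or> z' \<in> N x \<inter> X" using z VU NxTu by blast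
        then show ?thesis using m1 m3[OF z(2)] NxX by blast
      qed
      moreover have F02: "z' \<in> T u \<union> T x \<longleftrightarrow> cls z' = 0 \<or> cls z' = 2" using m0 m2 by blast
      moreover have F24: "z' \<in> T x \<union> (N u - N x) \<longleftrightarrow> cls z' = 2 \<or> cls z' = 4" using m2 m4 by blast
      moreover have F03: "z' \<in> T u \<union> (X - T x) \<longleftrightarrow> cls z' = 0 \<or> cls z' = 3" using m0 m3[OF z(2)] by blast
      ultimately show ?thesis
      proof (elim disjE)
        assume h: "cls z = 0"
        then have "N z = N u" using N0 m0 by blast
        then show ?thesis using h Fu by simp
      next
        assume h: "cls z = 1"
        then have "N z = T u \<union> T x" using N1 m1 by blast
        then show ?thesis using h F02 by simp
      next
        assume h: "cls z = 2"
        then have "N z = N x" using N2 m2 by blast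
        then show ?thesis using h Fx by simp
      next
        assume h: "cls z = 3"
        then have "N z = T x \<union> (N u - N x)" using N3 m3[OF z(1)] by blast
        then show ?thesis using h F24 by simp
      next
        assume h: "cls z = 4"
        then have "N z = T u \<union> (X - T x)" using N4 m4 by blast
        then show ?thesis using h F03 by auto
      qed
    qed
    also have "\<dots> \<longleftrightarrow> C5_E (cls z) (cls z')" using C5_tab lt z by simp
    finally show ?thesis .
  qed
  show ?thesis using lt cc adj k_def by blast
qed

end

theorem lemma5:
  fixes V :: "'a set" and E :: "'a \<Rightarrow> 'a \<Rightarrow> bool" and p :: nat
  assumes "p \<ge> 2"
    and "simple_graph V E"
    and "st_graph V E (p + 2) p"
    and "min_degree_ge V E p"
    and "card V \<ge> 2 * p + 3"
  shows "triangle_free V E \<longleftrightarrow>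
           (even p \<and> p \<ge> 6 \<and> graph_iso V E (blowup_V C5_V (p div 2)) (blowup_E C5_E (p div 2)))"
proof
  assume tf: "triangle_free V E"
  interpret G V E p using assms tf by unfold_locales
  define k where "k = p div 2"
  have pk: "p = 2 * k" using p_even k_def by simp
  obtain u v where "E u v" using edge_ex by blast
  then have u: "u \<in> V" using Ein by blast
  have "card (T u) = k" using tk[OF u] pk by simp
  then have cV5: "card V = 5 * k" using count[OF u] pk by simp
  then have k3: "k \<ge> 3" using assms(5) pk by simp
  obtain cls where c1: "\<forall>z\<in>V. cls z < (5::nat)" and c2: "\<forall>i<5. card {z\<in>V. cls z = i} = k"
    and c3: "\<forall>z\<in>V. \<forall>z'\<in>V. E z z' \<longleftrightarrow> C5_E (cls z) (cls z')"
    using C5_structure k_def by blast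
  obtain g where g: "bij_betw g V ({0..<5} \<times> {0..<k})" and gf: "\<forall>z\<in>V. fst (g z) = cls z"
    using cls_bij[OF fin c1 c2] by blast
  have gs: "\<forall>z\<in>V. snd (g z) < k" using bij_betw_apply[OF g] by fastforce
  have "graph_iso V E (blowup_V C5_V k) (blowup_E C5_E k)"
    unfolding graph_iso_def blowup_V_def C5_V_def
  proof (intro exI conjI ballI)
    show "bij_betw g V ({0..<5} \<times> {0..<k})" by (rule g)
    fix a b assume "a \<in> V" "b \<in> V"
    then show "E a b = blowup_E C5_E k (g a) (g b)"
      unfolding blowup_E_def using gs gf c3 by simp
  qed
  then have iso: "graph_iso V E (blowup_V C5_V (p div 2)) (blowup_E C5_E (p div 2))"
    unfolding k_def .
  have ev: "even p" using pk by (metis even_mult_iff even_numeral)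
  have p6: "p \<ge> 6" using pk k3 by linarith
  show "even p \<and> p \<ge> 6 \<and> graph_iso V E (blowup_V C5_V (p div 2)) (blowup_E C5_E (p div 2))"
    using iso ev p6 by blast
next
  assume "even p \<and> p \<ge> 6 \<and> graph_iso V E (blowup_V C5_V (p div 2)) (blowup_E C5_E (p div 2))"
  then obtain f where f: "\<forall>a\<in>V. \<forall>b\<in>V. E a b \<longleftrightarrow> blowup_E C5_E (p div 2) (f a) (f b)"
    unfolding graph_iso_def by blast
  show "triangle_free V E"
    unfolding triangle_free_def
  proof
    assume "\<exists>a\<in>V. \<exists>b\<in>V. \<exists>c\<in>V. E a b \<and> E b c \<and> E a c"
    then obtain a b c where abc: "a \<in> V" "b \<in> V" "c \<in> V" "E a b" "E b c" "E a c" by blast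
    then have "C5_E (fst (f a)) (fst (f b))" "C5_E (fst (f b)) (fst (f c))" "C5_E (fst (f a)) (fst (f c))"
      using f unfolding blowup_E_def by auto
    then show False using C5_notri by blast
  qed
qed

end
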